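(* Let $G$ be a group with $\mathrm{cl}(G)<\infty$ and let $1\to\mathbb{Z}_2\to\tilde G\to G\to 1$ be any double cover (short exact sequence of groups with kernel of order $2$). Then $\mathrm{cl}(\tilde G)<\infty$.
   Context: $[a,b]=aba^{-1}b^{-1}$. For a group $G$ and $x\in[G,G]$, $\mathrm{cl}_G(x)$ is the least $k\ge0$ with $x$ a product of $k$ commutators of elements of $G$; the commutator width is $\mathrm{cl}(G)=\sup_{x\in[G,G]}\mathrm{cl}_G(x)\in\mathbb{Z}_{\ge0}\cup\{\infty\}$. *)

theory Defs
  imports "HOL-Algebra.Algebra"
begin

definition commutator :: "('a, 'm) monoid_scheme \<Rightarrow> 'a \<Rightarrow> 'a \<Rightarrow> 'a" where
  "commutator G a b = a \<otimes>\<^bsub>G\<^esub> b \<otimes>\<^bsub>G\<^esub> inv\<^bsub>G\<^esub> a \<otimes>\<^bsub>G\<^esub> inv\<^bsub>G\<^esub> b"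

definition comm_prod :: "('a, 'm) monoid_scheme \<Rightarrow> ('a \<times> 'a) list \<Rightarrow> 'a" where
  "comm_prod G ps = foldr (\<lambda>p acc. commutator G (fst p) (snd p) \<otimes>\<^bsub>G\<^esub> acc) ps \<one>\<^bsub>G\<^esub>"

definition comm_length_le :: "('a, 'm) monoid_scheme \<Rightarrow> nat \<Rightarrow> 'a \<Rightarrow> bool" where
  "comm_length_le G k x \<longleftrightarrow>
     (\<exists>ps. length ps \<le> k \<and> set ps \<subseteq> carrier G \<times> carrier G \<and> x = comm_prod G ps)"

definition finite_commutator_width :: "('a, 'm) monoid_scheme \<Rightarrow> bool" where
  "finite_commutator_width G \<longleftrightarrow>
     (\<exists>N::nat. \<forall>x \<in> derived G (carrier G). comm_length_le G N x)"

end

theory Submission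
  imports Defs
begin

lemma comm_prod_carrier:
  fixes G :: "('a, 'm) monoid_scheme" (structure)
  assumes "group G" "set ps \<subseteq> carrier G \<times> carrier G"
  shows "comm_prod G ps \<in> carrier G"
  using assms(2)
proof (induction ps)
  case Nil then show ?case using assms(1) by (simp add: comm_prod_def group.is_monoid monoid.one_closed)
next
  case (Cons p ps)
  interpret group G by fact
  from Cons show ?case by (auto simp: comm_prod_def commutator_def)
qed

lemma comm_prod_derived:
  fixes G :: "('a, 'm) monoid_scheme" (structure)
  assumes "group G" "set ps \<subseteq> carrier G \<times> carrier G"
  shows "comm_prod G ps \<in> derived G (carrier G)"
  using assms(2)
proof (induction ps)
  interpret group G by fact
  have sg: "subgroup (derived G (carrier G)) G" by (rule derived_is_subgroup) simp
  { case Nil then show ?case using sg by (simp add: comm_prod_def subgroup.one_closed) }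
  { case (Cons p ps)
    obtain a b where p: "p = (a,b)" by force
    have ab: "a \<in> carrier G" "b \<in> carrier G" using Cons p by auto
    have "commutator G a b \<in> derived_set G (carrier G)" using ab unfolding commutator_def by blast
    hence c: "commutator G a b \<in> derived G (carrier G)" unfolding derived_def by (rule generate.incl)
    have "comm_prod G (p # ps) = commutator G a b \<otimes> comm_prod G ps" by (simp add: comm_prod_def p)
    then show ?case using Cons c sg by (simp add: subgroup.m_closed) }
qed

lemma comm_prod_append:
  fixes G :: "('a, 'm) monoid_scheme" (structure)
  assumes "group G" "set ps \<subseteq> carrier G \<times> carrier G" "set qs \<subseteq> carrier G \<times> carrier G"
  shows "comm_prod G (ps @ qs) = comm_prod G ps \<otimes>\<^bsub>G\<^esub> comm_prod G qs"
  using assms(2)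
proof (induction ps)
  interpret group G by fact
  { case Nil then show ?case using comm_prod_carrier[OF assms(1,3)] by (simp add: comm_prod_def) }
  { case (Cons p ps)
    obtain a b where p: "p = (a,b)" by force
    have ab: "a \<in> carrier G" "b \<in> carrier G" using Cons p by auto
    have "comm_prod G ((p # ps) @ qs) = commutator G a b \<otimes> comm_prod G (ps @ qs)" by (simp add: comm_prod_def p)
    also have "\<dots> = commutator G a b \<otimes> (comm_prod G ps \<otimes> comm_prod G qs)" using Cons by simp
    also have "\<dots> = (commutator G a b \<otimes> comm_prod G ps) \<otimes> comm_prod G qs"
      using ab Cons comm_prod_carrier[OF assms(1)] assms(3)
      by (intro m_assoc[symmetric]) (auto simp: commutator_def)
    also have "\<dots> = comm_prod G (p # ps) \<otimes> comm_prod G qs" by (simp add: comm_prod_def p)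
    finally show ?case . }
qed

lemma comm_prod_hom:
  assumes "group_hom H G f" "set ps \<subseteq> carrier H \<times> carrier H"
  shows "f (comm_prod H ps) = comm_prod G (map (\<lambda>(a,b). (f a, f b)) ps)"
  using assms(2)
proof (induction ps)
  interpret group_hom H G f by fact
  { case Nil then show ?case by (simp add: comm_prod_def) }
  { case (Cons p ps)
    obtain a b where p: "p = (a,b)" by force
    have ab: "a \<in> carrier H" "b \<in> carrier H" using Cons p by auto
    have cp: "comm_prod H ps \<in> carrier H" using comm_prod_carrier[OF G.group_axioms] Cons by auto
    have "f (comm_prod H (p # ps)) = f (commutator H a b \<otimes>\<^bsub>H\<^esub> comm_prod H ps)" by (simp add: comm_prod_def p)
    also have "\<dots> = commutator G (f a) (f b) \<otimes>\<^bsub>G\<^esub> f (comm_prod H ps)"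
      using ab cp by (simp add: commutator_def)
    finally show ?case using Cons by (simp add: comm_prod_def p)
  }
qed

lemma lift_list:
  assumes "f ` A = B" "set ps \<subseteq> B \<times> B"
  shows "\<exists>qs. set qs \<subseteq> A \<times> A \<and> map (\<lambda>(a,b). (f a, f b)) qs = ps \<and> length qs = length ps"
  using assms(2)
proof (induction ps)
  case Nil then show ?case by simp
next
  case (Cons p ps)
  then obtain qs where qs: "set qs \<subseteq> A \<times> A" "map (\<lambda>(a,b). (f a, f b)) qs = ps" "length qs = length ps" by auto
  obtain a b where p: "p = (a,b)" by force
  have "a \<in> f ` A" "b \<in> f ` A" using Cons p assms(1) by auto
  then obtain a' b' where "a' \<in> A" "b' \<in> A" "f a' = a" "f b' = b" by blast
  then show ?case using qs p by (intro exI[of _ "(a',b') # qs"]) auto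
qed

lemma derived_has_list:
  fixes G :: "('a, 'm) monoid_scheme" (structure)
  assumes "group G" "x \<in> derived G (carrier G)"
  shows "\<exists>ps. set ps \<subseteq> carrier G \<times> carrier G \<and> x = comm_prod G ps"
  using assms(2) unfolding derived_def
proof (induction rule: generate.induct)
  interpret group G by fact
  { case one show ?case by (intro exI[of _ "[]"]) (simp add: comm_prod_def) }
  { case (incl h)
    then obtain a b where ab: "a \<in> carrier G" "b \<in> carrier G" "h = a \<otimes> b \<otimes> inv a \<otimes> inv b" by blast
    show ?case using ab by (intro exI[of _ "[(a,b)]"]) (simp add: comm_prod_def commutator_def) }
  { case (inv h)
    then obtain a b where ab: "a \<in> carrier G" "b \<in> carrier G" "h = a \<otimes> b \<otimes> inv a \<otimes> inv b" by blast
    have "inv h = b \<otimes> a \<otimes> inv b \<otimes> inv a" using ab by (simp add: inv_mult_group m_assoc)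
    then show ?case using ab by (intro exI[of _ "[(b,a)]"]) (simp add: comm_prod_def commutator_def) }
  { case (eng h1 h2)
    then obtain ps qs where "set ps \<subseteq> carrier G \<times> carrier G" "h1 = comm_prod G ps"
       "set qs \<subseteq> carrier G \<times> carrier G" "h2 = comm_prod G qs" by blast
    then show ?case using comm_prod_append[OF assms(1)] by (intro exI[of _ "ps @ qs"]) auto }
qed

theorem mainTheorem7:
  fixes G :: "('a, 'm) monoid_scheme" and H :: "('b, 'n) monoid_scheme" and \<pi> :: "'b \<Rightarrow> 'a"
  assumes "group G" and "group H"
    and "finite_commutator_width G"
    and "\<pi> \<in> hom H G"
    and "\<pi> ` carrier H = carrier G"
    and "card (kernel H G \<pi>) = 2"
  shows "finite_commutator_width H"
proof -
  interpret gh: group_hom H G \<pi> using assms by (simp add: group_hom_def group_hom_axioms_def)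
  interpret H: group H by fact
  interpret G: group G by fact
  obtain N where N: "\<forall>x \<in> derived G (carrier G). comm_length_le G N x"
    using assms(3) unfolding finite_commutator_width_def by blast
  define K where "K = kernel H G \<pi> \<inter> derived H (carrier H)"
  have fK: "finite K" using assms(6) unfolding K_def by (metis card.infinite finite_Int zero_neq_numeral)
  have "\<forall>k\<in>K. \<exists>m. comm_length_le H m k"
  proof
    fix k assume "k \<in> K"
    hence "k \<in> derived H (carrier H)" unfolding K_def by auto
    then obtain ps where "set ps \<subseteq> carrier H \<times> carrier H" "k = comm_prod H ps"
      using derived_has_list[OF assms(2)] by blast
    then show "\<exists>m. comm_length_le H m k" unfolding comm_length_le_def by blast
  qed
  then obtain m where m: "\<forall>k\<in>K. comm_length_le H (m k) k" by metis
  define M where "M = Max (insert 0 (m ` K))"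
  have mM: "m k \<le> M" if "k \<in> K" for k unfolding M_def using fK that by auto
  have sg: "subgroup (derived H (carrier H)) H" by (rule group.derived_is_subgroup[OF assms(2)]) simp
  have "\<forall>x \<in> derived H (carrier H). comm_length_le H (N + M) x"
  proof
    fix x assume x: "x \<in> derived H (carrier H)"
    have xc: "x \<in> carrier H" using x sg subgroup.subset by blast
    have "\<pi> x \<in> derived G (carrier G)" using x gh.derived_img[of "carrier H"] assms(5) by auto
    then obtain ps where ps: "length ps \<le> N" "set ps \<subseteq> carrier G \<times> carrier G" "\<pi> x = comm_prod G ps"
      using N unfolding comm_length_le_def by blast
    obtain qs where qs: "set qs \<subseteq> carrier H \<times> carrier H" "map (\<lambda>(a,b). (\<pi> a, \<pi> b)) qs = ps"
        "length qs = length ps"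
      using lift_list[OF assms(5) ps(2)] by blast
    define c where "c = comm_prod H qs"
    have cc: "c \<in> carrier H" unfolding c_def using comm_prod_carrier[OF assms(2) qs(1)] .
    have cd: "c \<in> derived H (carrier H)" unfolding c_def using comm_prod_derived[OF assms(2) qs(1)] .
    have pc: "\<pi> c = \<pi> x" unfolding c_def using comm_prod_hom[OF gh.group_hom_axioms qs(1)] qs(2) ps(3) by simp
    define k where "k = inv\<^bsub>H\<^esub> c \<otimes>\<^bsub>H\<^esub> x"
    have kc: "k \<in> carrier H" unfolding k_def using cc xc by simp
    have "\<pi> k = \<one>\<^bsub>G\<^esub>" unfolding k_def using cc xc pc by simp
    hence "k \<in> kernel H G \<pi>" using kc by (simp add: kernel_def)
    moreover have "k \<in> derived H (carrier H)" unfolding k_def using cd x sg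
      by (simp add: subgroup.m_closed subgroup.m_inv_closed)
    ultimately have kK: "k \<in> K" unfolding K_def by simp
    then obtain rs where rs: "length rs \<le> m k" "set rs \<subseteq> carrier H \<times> carrier H" "k = comm_prod H rs"
      using m unfolding comm_length_le_def by blast
    have "x = c \<otimes>\<^bsub>H\<^esub> k" unfolding k_def using cc xc by (simp add: group.inv_solve_left[OF assms(2)] monoid.m_assoc[OF group.is_monoid[OF assms(2)], symmetric] group.r_inv[OF assms(2)] group.r_inv[OF assms(2)])
    also have "\<dots> = comm_prod H (qs @ rs)" unfolding c_def rs(3)
      using comm_prod_append[OF assms(2) qs(1) rs(2)] by simp
    finally have "x = comm_prod H (qs @ rs)" .
    moreover have "length (qs @ rs) \<le> N + M" using rs(1) mM[OF kK] qs(3) ps(1) by simp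
    ultimately show "comm_length_le H (N + M) x" unfolding comm_length_le_def using qs(1) rs(2) by (intro exI[of _ "qs @ rs"]) auto
  qed
  then show ?thesis unfolding finite_commutator_width_def by blast
qed

end
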